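(* Let $\mathscr X$ be a compact subset of $\mathbb R^d$ and $\|\cdot\|$ a norm on $\mathbb R^d$. Let $a\in(0,1]$ and $\alpha_1,\alpha_2,\ldots\in[a,1]$. Let $\mathbf x_1\in\mathscr X$ be arbitrary and, for $n=1,2,\ldots$, let $\mathbf x_{n+1}$ be any point of $\mathscr X$ such that $\min_{1\le i\le n}\|\mathbf x_{n+1}-\mathbf x_i\|\ge\alpha_n\,\mathsf{CR}(\mathbf X_n)$, where $\mathbf X_n=\{\mathbf x_1,\ldots,\mathbf x_n\}$ (relaxed greedy packing). Then for all $n\ge2$, $$\mathsf{CR}(\mathbf X_n)\le\frac2a\,\mathsf{CR}_n^*,\qquad\mathsf{SR}(\mathbf X_n)\ge\frac a2\,\mathsf{SR}_n^*,\qquad\mathsf{MR}(\mathbf X_n)\le\frac2a.$$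
   Context: For a design $\mathbf X_n$ of $n$ points in $\mathscr X$: fill distance $\mathsf{CR}(\mathbf X_n)=\sup_{\mathbf x\in\mathscr X}\min_{\mathbf x_i\in\mathbf X_n}\|\mathbf x-\mathbf x_i\|$; separation radius $\mathsf{SR}(\mathbf X_n)=\tfrac12\min_{\mathbf x_i\ne\mathbf x_j\in\mathbf X_n}\|\mathbf x_i-\mathbf x_j\|$; mesh-ratio $\mathsf{MR}(\mathbf X_n)=\mathsf{CR}(\mathbf X_n)/\mathsf{SR}(\mathbf X_n)$. $\mathsf{CR}_n^*$ is the minimum of $\mathsf{CR}$ and $\mathsf{SR}_n^*$ the maximum of $\mathsf{SR}$ over all $n$-point designs of distinct points in $\mathscr X$. *)

theory Defs
  imports "HOL-Analysis.Analysis"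
begin

definition is_norm :: "('a::euclidean_space \<Rightarrow> real) \<Rightarrow> bool" where
  "is_norm N \<longleftrightarrow>
     (\<forall>x. 0 \<le> N x) \<and> (\<forall>x. N x = 0 \<longleftrightarrow> x = 0) \<and>
     (\<forall>c x. N (c *\<^sub>R x) = \<bar>c\<bar> * N x) \<and> (\<forall>x y. N (x + y) \<le> N x + N y)"

text \<open>Fill distance (covering radius) of a finite design D in the domain X w.r.t. norm N.\<close>
definition fill_dist :: "('a::euclidean_space \<Rightarrow> real) \<Rightarrow> 'a set \<Rightarrow> 'a set \<Rightarrow> real" where
  "fill_dist N X D = (SUP y\<in>X. Min ((\<lambda>p. N (y - p)) ` D))"

definition sep_rad :: "('a::euclidean_space \<Rightarrow> real) \<Rightarrow> 'a set \<Rightarrow> real" where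
  "sep_rad N D = Min {N (p - q) | p q. p \<in> D \<and> q \<in> D \<and> p \<noteq> q} / 2"

definition mesh_ratio :: "('a::euclidean_space \<Rightarrow> real) \<Rightarrow> 'a set \<Rightarrow> 'a set \<Rightarrow> real" where
  "mesh_ratio N X D = fill_dist N X D / sep_rad N D"

definition designs :: "'a set \<Rightarrow> nat \<Rightarrow> 'a set set" where
  "designs X n = {D. D \<subseteq> X \<and> finite D \<and> card D = n}"

definition opt_fill :: "('a::euclidean_space \<Rightarrow> real) \<Rightarrow> 'a set \<Rightarrow> nat \<Rightarrow> real" where
  "opt_fill N X n = (INF D\<in>designs X n. fill_dist N X D)"

definition opt_sep :: "('a::euclidean_space \<Rightarrow> real) \<Rightarrow> 'a set \<Rightarrow> nat \<Rightarrow> real" where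
  "opt_sep N X n = (SUP D\<in>designs X n. sep_rad N D)"

end

theory Submission
  imports Defs
begin

lemma nrm_basic:
  assumes "is_norm N"
  shows "N 0 = 0" "N (- x) = N x" "N (u - v) = N (v - u)" "N (u + v) \<le> N u + N v" "0 \<le> N x"
    "N (c *\<^sub>R x) = \<bar>c\<bar> * N x"
proof -
  show "N 0 = 0" using assms unfolding is_norm_def by auto
  show nx: "N (- x) = N x" for x using assms unfolding is_norm_def
    by (metis abs_minus_cancel abs_one mult_cancel_right1 scaleR_minus1_left)
  show "N (u - v) = N (v - u)" using nx[of "u - v"] by simp
  show "N (u + v) \<le> N u + N v" "0 \<le> N x" "N (c *\<^sub>R x) = \<bar>c\<bar> * N x"
    using assms unfolding is_norm_def by auto
qed

lemma nrm_sum: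
  assumes "is_norm N" "finite S"
  shows "N (sum f S) \<le> sum (\<lambda>i. N (f i)) S"
  using assms(2)
proof (induction S rule: finite_induct)
  case empty then show ?case using nrm_basic[OF assms(1)] by simp
next
  case (insert a S)
  then show ?case using nrm_basic(4)[OF assms(1), of "f a" "sum f S"] by simp
qed

lemma nrm_bound:
  fixes N :: "'a::euclidean_space \<Rightarrow> real"
  assumes "is_norm N"
  shows "N x \<le> (\<Sum>b\<in>Basis. N b) * norm x"
proof -
  have "N x = N (\<Sum>b\<in>Basis. (x \<bullet> b) *\<^sub>R b)" by (simp add: euclidean_representation)
  also have "\<dots> \<le> (\<Sum>b\<in>Basis. N ((x \<bullet> b) *\<^sub>R b))" by (rule nrm_sum[OF assms]) simp
  also have "\<dots> = (\<Sum>b\<in>Basis. \<bar>x \<bullet> b\<bar> * N b)" using nrm_basic(6)[OF assms] by simp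
  also have "\<dots> \<le> (\<Sum>b\<in>Basis. norm x * N b)"
    by (rule sum_mono, rule mult_right_mono) (auto simp: Basis_le_norm nrm_basic(5)[OF assms])
  also have "\<dots> = (\<Sum>b\<in>Basis. N b) * norm x" by (simp add: sum_distrib_left mult.commute)
  finally show ?thesis .
qed

lemma md_bdd:
  fixes N :: "'a::euclidean_space \<Rightarrow> real"
  assumes "is_norm N" "bounded X" "finite D" "p0 \<in> D"
  shows "bdd_above ((\<lambda>y. Min ((\<lambda>p. N (y - p)) ` D)) ` X)"
proof -
  obtain B where B: "\<And>y. y \<in> X \<Longrightarrow> norm y \<le> B" using assms(2) bounded_iff by blast
  define C where "C = (\<Sum>b\<in>Basis. N b)"
  have C0: "0 \<le> C" unfolding C_def using nrm_basic(5)[OF assms(1)] by (simp add: sum_nonneg)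
  show ?thesis unfolding bdd_above_def
  proof (intro exI ballI)
    fix z assume "z \<in> (\<lambda>y. Min ((\<lambda>p. N (y - p)) ` D)) ` X"
    then obtain y where y: "y \<in> X" and z: "z = Min ((\<lambda>p. N (y - p)) ` D)" by auto
    have "z \<le> N (y - p0)" unfolding z using assms(3,4) by simp
    also have "\<dots> \<le> C * norm (y - p0)" using nrm_bound[OF assms(1)] C_def by simp
    also have "\<dots> \<le> C * (B + norm p0)"
      by (rule mult_left_mono[OF _ C0]) (smt (verit) B y norm_triangle_ineq4)
    finally show "z \<le> C * (B + norm p0)" .
  qed
qed

lemma md_le_fill:
  fixes N :: "'a::euclidean_space \<Rightarrow> real"
  assumes "is_norm N" "bounded X" "finite D" "D \<noteq> {}" "y \<in> X"
  shows "Min ((\<lambda>p. N (y - p)) ` D) \<le> fill_dist N X D"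
  unfolding fill_dist_def
  using assms md_bdd[OF assms(1,2,3)] by (intro cSUP_upper) auto

lemma fill_nonneg:
  fixes N :: "'a::euclidean_space \<Rightarrow> real"
  assumes "is_norm N" "bounded X" "finite D" "D \<noteq> {}" "y \<in> X"
  shows "0 \<le> fill_dist N X D"
proof -
  have "0 \<le> Min ((\<lambda>p. N (y - p)) ` D)" using assms nrm_basic(5)[OF assms(1)] by simp
  then show ?thesis using md_le_fill[OF assms] by linarith
qed

lemma fill_mono:
  fixes N :: "'a::euclidean_space \<Rightarrow> real"
  assumes "is_norm N" "bounded X" "finite D'" "D \<noteq> {}" "D \<subseteq> D'" "X \<noteq> {}"
  shows "fill_dist N X D' \<le> fill_dist N X D"
proof -
  have fD: "finite D" using assms finite_subset by blast
  show ?thesis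
    unfolding fill_dist_def
  proof (rule cSUP_least[OF assms(6)])
    fix y assume y: "y \<in> X"
    have "Min ((\<lambda>p. N (y - p)) ` D') \<le> Min ((\<lambda>p. N (y - p)) ` D)"
      using assms fD by (intro Min_antimono) auto
    also have "\<dots> \<le> (SUP y\<in>X. Min ((\<lambda>p. N (y - p)) ` D))"
      using md_le_fill[OF assms(1,2) fD assms(4) y] unfolding fill_dist_def .
    finally show "Min ((\<lambda>p. N (y - p)) ` D') \<le> (SUP y\<in>X. Min ((\<lambda>p. N (y - p)) ` D))" .
  qed
qed

lemma pigeon_cover:
  fixes N :: "'a::euclidean_space \<Rightarrow> real"
  assumes "is_norm N" "bounded X" "finite D" "D \<noteq> {}" "finite A" "card D < card A"
    "\<And>i. i \<in> A \<Longrightarrow> g i \<in> X"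
  shows "\<exists>i\<in>A. \<exists>j\<in>A. i \<noteq> j \<and> N (g i - g j) \<le> 2 * fill_dist N X D"
proof -
  have ex: "\<exists>p. p \<in> D \<and> N (y - p) = Min ((\<lambda>p. N (y - p)) ` D)" for y
  proof -
    have "Min ((\<lambda>p. N (y - p)) ` D) \<in> (\<lambda>p. N (y - p)) ` D" using assms(3,4) by (intro Min_in) auto
    then show ?thesis by auto
  qed
  define c where "c y = (SOME p. p \<in> D \<and> N (y - p) = Min ((\<lambda>p. N (y - p)) ` D))" for y
  have c: "c y \<in> D" "N (y - c y) = Min ((\<lambda>p. N (y - p)) ` D)" for y
    using someI_ex[OF ex[of y]] unfolding c_def by auto
  have "card ((c \<circ> g) ` A) \<le> card D" using c(1) assms(3) by (intro card_mono) auto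
  then have "\<not> inj_on (c \<circ> g) A" using assms(6) card_image by fastforce
  then obtain i j where ij: "i \<in> A" "j \<in> A" "i \<noteq> j" "c (g i) = c (g j)"
    unfolding inj_on_def by auto
  let ?p = "c (g i)"
  have "N (g i - g j) = N ((g i - ?p) + (?p - g j))" by simp
  also have "\<dots> \<le> N (g i - ?p) + N (?p - g j)" by (rule nrm_basic(4)[OF assms(1)])
  also have "\<dots> = N (g i - c (g i)) + N (g j - c (g j))"
    using ij(4) nrm_basic(3)[OF assms(1)] by metis
  also have "\<dots> \<le> 2 * fill_dist N X D"
    using md_le_fill[OF assms(1-4)] c(2) assms(7) ij(1,2) by (smt (verit))
  finally show ?thesis using ij by blast
qed

theorem theorem5:
  fixes N :: "'a::euclidean_space \<Rightarrow> real"
    and X :: "'a set"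
    and x :: "nat \<Rightarrow> 'a"
    and \<alpha> :: "nat \<Rightarrow> real"
    and a :: real
  assumes norm: "is_norm N"
    and cpt: "compact X"
    and a: "0 < a" "a \<le> 1"
    and alpha: "\<And>n. n \<ge> 1 \<Longrightarrow> a \<le> \<alpha> n \<and> \<alpha> n \<le> 1"
    and x1: "x 1 \<in> X"
    and greedy: "\<And>n. n \<ge> 1 \<Longrightarrow> x (n + 1) \<in> X \<and>
        Min ((\<lambda>i. N (x (n + 1) - x i)) ` {1..n}) \<ge> \<alpha> n * fill_dist N X (x ` {1..n})"
    and n: "n \<ge> 2"
    and enough: "designs X n \<noteq> {}"
  shows "fill_dist N X (x ` {1..n}) \<le> (2 / a) * opt_fill N X n \<and>
         sep_rad N (x ` {1..n}) \<ge> (a / 2) * opt_sep N X n \<and>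
         mesh_ratio N X (x ` {1..n}) \<le> 2 / a"
proof -
  have bX: "bounded X" using cpt compact_imp_bounded by blast
  have Xne: "X \<noteq> {}" using x1 by blast
  define h where "h k = fill_dist N X (x ` {1..k})" for k
  have xX: "x k \<in> X" if "k \<ge> 1" for k
  proof (cases "k = 1")
    case True then show ?thesis using x1 by simp
  next
    case False
    then have "k = (k - 1) + 1" "k - 1 \<ge> 1" using that by auto
    then show ?thesis using greedy[of "k - 1"] by metis
  qed
  have h0: "0 \<le> h k" if "k \<ge> 1" for k
    unfolding h_def using that by (intro fill_nonneg[OF norm bX _ _ x1]) auto
  have hmono: "h m \<le> h k" if "1 \<le> k" "k \<le> m" for k m
    unfolding h_def using that by (intro fill_mono[OF norm bX _ _ _ Xne]) auto
  have sepk: "a * h (j - 1) \<le> N (x j - x i)" if "1 \<le> i" "i < j" for i j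
  proof -
    have jj: "j = (j - 1) + 1" "j - 1 \<ge> 1" using that by auto
    have "a * h (j - 1) \<le> \<alpha> (j - 1) * h (j - 1)"
      using alpha[OF jj(2)] h0[OF jj(2)] by (simp add: mult_right_mono)
    also have "\<dots> \<le> Min ((\<lambda>i. N (x (j - 1 + 1) - x i)) ` {1..j - 1})"
      using greedy[OF jj(2)] unfolding h_def by simp
    also have "\<dots> \<le> N (x (j - 1 + 1) - x i)" using that by (intro Min_le) auto
    finally show ?thesis using jj(1) by simp
  qed
  have sepk2: "a * h m \<le> N (x j - x i)" if "1 \<le> i" "1 \<le> j" "i \<noteq> j" "i \<le> m + 1" "j \<le> m + 1" "1 \<le> m" for i j m
  proof (cases "i < j")
    case True
    have "a * h m \<le> a * h (j - 1)" using hmono[of "j - 1" m] True that a by auto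
    then show ?thesis using sepk[of i j] True that by linarith
  next
    case False
    then have "j < i" using that by auto
    have "a * h m \<le> a * h (i - 1)" using hmono[of "i - 1" m] \<open>j < i\<close> that a by auto
    then show ?thesis using sepk[of j i] \<open>j < i\<close> that nrm_basic(3)[OF norm] by smt
  qed
  obtain D0 where D0: "D0 \<in> designs X n" using enough by auto
  have stepA: "h n \<le> (2 / a) * fill_dist N X D" if D: "D \<in> designs X n" for D
  proof -
    have D': "D \<subseteq> X" "finite D" "card D = n" using D unfolding designs_def by auto
    have "D \<noteq> {}" using D' n by auto
    from pigeon_cover[OF norm bX D'(2) this, of "{1..n+1}" x] D' xX
    obtain i j where ij: "i \<in> {1..n+1}" "j \<in> {1..n+1}" "i \<noteq> j" "N (x i - x j) \<le> 2 * fill_dist N X D"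
      by auto
    have "a * h n \<le> N (x i - x j)" using sepk2[of j i n] ij n by auto
    then have "a * h n \<le> 2 * fill_dist N X D" using ij by linarith
    then show ?thesis using a by (simp add: field_simps)
  qed
  have optA: "h n * (a / 2) \<le> opt_fill N X n"
    unfolding opt_fill_def
  proof (rule cINF_greatest[OF enough])
    fix D assume "D \<in> designs X n"
    from stepA[OF this] show "h n * (a / 2) \<le> fill_dist N X D" using a by (simp add: field_simps)
  qed
  have A: "h n \<le> (2 / a) * opt_fill N X n" using optA a by (simp add: field_simps)
  have n1: "n - 1 \<ge> 1" using n by auto
  have stepB: "sep_rad N D \<le> h (n - 1) \<and> 0 < h (n - 1)" if D: "D \<in> designs X n" for D
  proof -
    have D': "D \<subseteq> X" "finite D" "card D = n" using D unfolding designs_def by auto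
    have cl: "card (x ` {1..n-1}) < card D"
      using card_image_le[of "{1..n-1}" x] D'(3) n by auto
    from pigeon_cover[OF norm bX _ _ D'(2) cl, of id] D' n1
    obtain p q where pq: "p \<in> D" "q \<in> D" "p \<noteq> q" "N (p - q) \<le> 2 * h (n - 1)"
      unfolding h_def by auto
    have fin: "finite {N (p - q) |p q. p \<in> D \<and> q \<in> D \<and> p \<noteq> q}"
      by (rule finite_subset[of _ "(\<lambda>(p, q). N (p - q)) ` (D \<times> D)"]) (auto simp: D'(2))
    have "Min {N (p - q) |p q. p \<in> D \<and> q \<in> D \<and> p \<noteq> q} \<le> N (p - q)"
      using pq by (intro Min_le[OF fin]) auto
    moreover have "0 < N (p - q)" using pq(3) norm nrm_basic(5)[OF norm] unfolding is_norm_def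
      by (metis eq_iff_diff_eq_0 order_le_less)
    ultimately show ?thesis using pq(4) unfolding sep_rad_def by auto
  qed
  have hpos: "0 < h (n - 1)" using stepB[OF D0] by auto
  have optB: "opt_sep N X n \<le> h (n - 1)"
    unfolding opt_sep_def using stepB enough by (intro cSUP_least) auto
  let ?S = "{N (p - q) |p q. p \<in> x ` {1..n} \<and> q \<in> x ` {1..n} \<and> p \<noteq> q}"
  have finS: "finite ?S"
    by (rule finite_subset[of _ "(\<lambda>(p, q). N (p - q)) ` (x ` {1..n} \<times> x ` {1..n})"]) auto
  have x12: "a * h (n - 1) \<le> N (x 2 - x 1)" using sepk2[of 1 2 "n - 1"] n by auto
  have "x 2 \<noteq> x 1"
  proof
    assume "x 2 = x 1"
    then have "N (x 2 - x 1) = 0" using nrm_basic(1)[OF norm] by simp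
    then show False using x12 hpos a by (smt (verit) mult_pos_pos)
  qed
  moreover have "x 2 \<in> x ` {1..n}" "x 1 \<in> x ` {1..n}" using n by auto
  ultimately have neS: "?S \<noteq> {}" by blast
  have Sge: "a * h (n - 1) \<le> Min ?S"
  proof (rule Min.boundedI[OF finS neS])
    fix s assume "s \<in> ?S"
    then obtain i j where "i \<in> {1..n}" "j \<in> {1..n}" "x i \<noteq> x j" "s = N (x i - x j)" by auto
    moreover have "i \<noteq> j" using \<open>x i \<noteq> x j\<close> by auto
    moreover have "n - 1 + 1 = n" using n by auto
    ultimately show "a * h (n - 1) \<le> s" using sepk2[of j i "n - 1"] n by auto
  qed
  have C: "a * h (n - 1) / 2 \<le> sep_rad N (x ` {1..n})" unfolding sep_rad_def using Sge by simp
  have B: "(a / 2) * opt_sep N X n \<le> sep_rad N (x ` {1..n})"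
    using C optB a by (smt (verit) mult_left_mono divide_pos_pos times_divide_eq_left mult.commute)
  have spos: "0 < sep_rad N (x ` {1..n})" using C a hpos by (smt (verit) mult_pos_pos divide_pos_pos)
  have "h n \<le> h (n - 1)" using hmono[of "n - 1" n] n1 by auto
  then have ah: "a * h n \<le> a * h (n - 1)" using a by (simp add: mult_left_mono)
  have "a * h n \<le> 2 * sep_rad N (x ` {1..n})" using ah C by linarith
  then have "h n \<le> (2 / a) * sep_rad N (x ` {1..n})" using C a by (simp add: field_simps)
  then have M: "mesh_ratio N X (x ` {1..n}) \<le> 2 / a"
    unfolding mesh_ratio_def using spos h_def by (simp add: divide_le_eq mult.commute)
  show ?thesis using A B M unfolding h_def by blast
qed

end
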